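(* Let $N$ be a $(-1,0,1)$-matrix of size $b\times c$ such that each column $\mathbf{n}^j$ satisfies one of: (i) $\sum_{h=1}^b n^j_h=0$; (ii) $b/2$ entries of $\mathbf{n}^j$ equal $1$ and $b/2$ entries equal $0$; (iii) $b/2$ entries equal $-1$ and $b/2$ entries equal $0$; (iv) $\mathbf{n}^j=\mathbf{1}_b$; (v) $\mathbf{n}^j=-\mathbf{1}_b$. Let $\tilde N$ be the matrix obtained from $N$ by replacing each column of type (i) by $-\mathbf{n}^j$, each column of type (ii) by $\mathbf{1}_b-\mathbf{n}^j$, each column of type (iii) by $-\mathbf{1}_b-\mathbf{n}^j$, and leaving columns of types (iv) and (v) unchanged. Let $B$ be a symmetric $b\times b$ matrix with constant row (and column) sums, and let $C$ be a symmetric $c\times c$ matrix. Then the matrices $$M=\begin{pmatrix} B & N\\ N^T & C\end{pmatrix}\quad\text{and}\quad \tilde M=\begin{pmatrix} B & \tilde N\\ \tilde N^T & C\end{pmatrix}$$ are cospectral (have the same characteristic polynomial).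
   Context: $\mathbf{1}_b$ denotes the all-ones column vector of length $b$. *)

theory Defs
  imports "Jordan_Normal_Form.Char_Poly"
begin

definition col_type_i :: "real mat \<Rightarrow> nat \<Rightarrow> bool" where
  "col_type_i N j \<longleftrightarrow> (\<Sum>h<dim_row N. N $$ (h, j)) = 0"

definition col_type_ii :: "real mat \<Rightarrow> nat \<Rightarrow> bool" where
  "col_type_ii N j \<longleftrightarrow>
     2 * card {h. h < dim_row N \<and> N $$ (h, j) = 1} = dim_row N \<and>
     2 * card {h. h < dim_row N \<and> N $$ (h, j) = 0} = dim_row N"

definition col_type_iii :: "real mat \<Rightarrow> nat \<Rightarrow> bool" where
  "col_type_iii N j \<longleftrightarrow>
     2 * card {h. h < dim_row N \<and> N $$ (h, j) = -1} = dim_row N \<and>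
     2 * card {h. h < dim_row N \<and> N $$ (h, j) = 0} = dim_row N"

definition col_type_iv :: "real mat \<Rightarrow> nat \<Rightarrow> bool" where
  "col_type_iv N j \<longleftrightarrow> (\<forall>h<dim_row N. N $$ (h, j) = 1)"

definition col_type_v :: "real mat \<Rightarrow> nat \<Rightarrow> bool" where
  "col_type_v N j \<longleftrightarrow> (\<forall>h<dim_row N. N $$ (h, j) = -1)"

text \<open>For b \<ge> 1 the five types are mutually exclusive; for b = 0 all columns are empty.\<close>

definition tilde_mat :: "real mat \<Rightarrow> real mat" where
  "tilde_mat N = mat (dim_row N) (dim_col N) (\<lambda>(h, j).
     if col_type_i N j then - N $$ (h, j)
     else if col_type_ii N j then 1 - N $$ (h, j)
     else if col_type_iii N j then -1 - N $$ (h, j)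
     else N $$ (h, j))"

end

theory Submission
  imports Defs
begin

definition Qm :: "nat \<Rightarrow> real mat" where
  "Qm b = mat b b (\<lambda>(i,k). 2 / real b - (if i = k then 1 else 0))"

lemma Qm_carrier[simp]: "Qm b \<in> carrier_mat b b"
  by (simp add: Qm_def)

lemma Qm_left:
  assumes X: "X \<in> carrier_mat b m" and i: "i < b" and j: "j < m"
  shows "(Qm b * X) $$ (i,j) = 2 / real b * (\<Sum>l<b. X $$ (l,j)) - X $$ (i,j)"
proof -
  have "(Qm b * X) $$ (i,j) = (\<Sum>l\<in>{0..<b}. (2 / real b - (if i = l then 1 else 0)) * X $$ (l,j))"
    using X i j by (simp add: Qm_def scalar_prod_def)
  also have "\<dots> = (\<Sum>l<b. 2 / real b * X $$ (l,j) - (if i = l then X $$ (l,j) else 0))"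
    by (rule sum.cong) (auto simp: lessThan_atLeast0 left_diff_distrib)
  also have "\<dots> = (\<Sum>l<b. 2 / real b * X $$ (l,j)) - (\<Sum>l<b. (if i = l then X $$ (l,j) else 0))"
    by (rule sum_subtractf)
  also have "\<dots> = 2 / real b * (\<Sum>l<b. X $$ (l,j)) - X $$ (i,j)"
    using i by (simp add: sum_distrib_left)
  finally show ?thesis .
qed

lemma Qm_right:
  assumes X: "X \<in> carrier_mat m b" and i: "i < m" and j: "j < b"
  shows "(X * Qm b) $$ (i,j) = 2 / real b * (\<Sum>l<b. X $$ (i,l)) - X $$ (i,j)"
proof -
  have "(X * Qm b) $$ (i,j) = (\<Sum>l\<in>{0..<b}. X $$ (i,l) * (2 / real b - (if l = j then 1 else 0)))"
    using X i j by (simp add: Qm_def scalar_prod_def)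
  also have "\<dots> = (\<Sum>l<b. 2 / real b * X $$ (i,l) - (if l = j then X $$ (i,l) else 0))"
    by (rule sum.cong) (auto simp: lessThan_atLeast0 right_diff_distrib)
  also have "\<dots> = (\<Sum>l<b. 2 / real b * X $$ (i,l)) - (\<Sum>l<b. (if l = j then X $$ (i,l) else 0))"
    by (rule sum_subtractf)
  also have "\<dots> = 2 / real b * (\<Sum>l<b. X $$ (i,l)) - X $$ (i,j)"
    using j by (simp add: sum_distrib_left)
  finally show ?thesis .
qed

lemma Qm_sq: "Qm b * Qm b = 1\<^sub>m b"
proof (rule eq_matI)
  fix i j assume i: "i < dim_row (1\<^sub>m b :: real mat)" and j: "j < dim_col (1\<^sub>m b :: real mat)"
  hence ib: "i < b" and jb: "j < b" by auto
  have s: "(\<Sum>l<b. Qm b $$ (l,j)) = 1"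
  proof -
    have "(\<Sum>l<b. Qm b $$ (l,j)) = (\<Sum>l<b. 2 / real b - (if l = j then 1 else 0))"
      by (rule sum.cong, insert jb, auto simp: Qm_def)
    also have "\<dots> = 2 - 1" using jb by (simp add: sum_subtractf)
    finally show ?thesis by simp
  qed
  show "(Qm b * Qm b) $$ (i,j) = 1\<^sub>m b $$ (i,j)"
    unfolding Qm_left[OF Qm_carrier ib jb] s using ib jb by (simp add: Qm_def)
qed (auto simp: Qm_def)

lemma Qm_comm:
  assumes B: "B \<in> carrier_mat b b" and sym: "transpose_mat B = B"
    and rs: "\<forall>i<b. (\<Sum>k<b. B $$ (i, k)) = r"
  shows "Qm b * B = B * Qm b"
proof (rule eq_matI)
  fix i j assume "i < dim_row (B * Qm b)" "j < dim_col (B * Qm b)"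
  hence i: "i < b" and j: "j < b" using B by (auto simp: Qm_def)
  have cs: "(\<Sum>l<b. B $$ (l,j)) = r"
  proof -
    have "(\<Sum>l<b. B $$ (l,j)) = (\<Sum>l<b. B $$ (j,l))"
    proof (rule sum.cong)
      fix l assume "l \<in> {..<b}"
      hence "B $$ (l,j) = transpose_mat B $$ (j,l)" using B j by auto
      thus "B $$ (l,j) = B $$ (j,l)" using sym by simp
    qed simp
    thus ?thesis using rs j by simp
  qed
  show "(Qm b * B) $$ (i,j) = (B * Qm b) $$ (i,j)"
    unfolding Qm_left[OF B i j] Qm_right[OF B i j] cs using rs i by simp
qed (insert B, auto simp: Qm_def)

lemma Qm_tilde:
  assumes N: "N \<in> carrier_mat b c"
    and ent: "\<forall>h<b. \<forall>j<c. N $$ (h, j) \<in> {-1, 0, 1}"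
    and ty: "\<forall>j<c. col_type_i N j \<or> col_type_ii N j \<or> col_type_iii N j \<or>
                col_type_iv N j \<or> col_type_v N j"
  shows "Qm b * N = tilde_mat N"
proof (rule eq_matI)
  fix h j assume "h < dim_row (tilde_mat N)" "j < dim_col (tilde_mat N)"
  hence h: "h < b" and j: "j < c" using N by (auto simp: tilde_mat_def)
  have dr: "dim_row N = b" using N by auto
  define s where "s = (\<Sum>l<b. N $$ (l,j))"
  have bpos: "real b > 0" using h by auto
  have lhs: "(Qm b * N) $$ (h,j) = 2 / real b * s - N $$ (h,j)"
    unfolding s_def by (rule Qm_left[OF N h j])
  have rhs: "tilde_mat N $$ (h,j) = (if col_type_i N j then - N $$ (h, j)
     else if col_type_ii N j then 1 - N $$ (h, j)
     else if col_type_iii N j then -1 - N $$ (h, j)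
     else N $$ (h, j))" using h j N by (simp add: tilde_mat_def)
  have two: "s = real (card S) * v"
    if S: "S = {l. l < b \<and> N $$ (l,j) = v}" and T: "T = {l. l < b \<and> N $$ (l,j) = 0}"
      and cS: "2 * card S = b" and cT: "2 * card T = b" and v: "v \<noteq> 0" for S T v
  proof -
    have fin: "finite S" "finite T" using S T by auto
    have disj: "S \<inter> T = {}" using S T v by auto
    have sub: "S \<union> T \<subseteq> {..<b}" using S T by auto
    have "card (S \<union> T) = b" using card_Un_disjoint[OF fin disj] cS cT by simp
    hence un: "S \<union> T = {..<b}" using sub by (metis card_lessThan card_subset_eq finite_lessThan)
    have "s = (\<Sum>l\<in>S. N $$ (l,j)) + (\<Sum>l\<in>T. N $$ (l,j))"
      unfolding s_def un[symmetric] by (rule sum.union_disjoint[OF fin disj])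
    also have "\<dots> = real (card S) * v" using S T by simp
    finally show ?thesis .
  qed
  show "(Qm b * N) $$ (h,j) = tilde_mat N $$ (h,j)"
  proof (cases "col_type_i N j")
    case True
    hence "s = 0" unfolding s_def col_type_i_def dr .
    thus ?thesis using lhs rhs True by simp
  next
    case ni: False
    show ?thesis
    proof (cases "col_type_ii N j")
      case True
      define S1 where "S1 = {l. l < b \<and> N $$ (l,j) = 1}"
      have c1: "2 * card S1 = b" and c0: "2 * card {l. l < b \<and> N $$ (l,j) = 0} = b"
        using True unfolding col_type_ii_def dr S1_def by auto
      have "s = real (card S1) * 1" by (rule two[OF S1_def refl c1 c0]) simp
      moreover have "real b = 2 * real (card S1)" using arg_cong[OF c1, of real] by simp
      ultimately have "s = real b / 2" by simp
      thus ?thesis using lhs rhs True ni bpos by simp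
    next
      case nii: False
      show ?thesis
      proof (cases "col_type_iii N j")
        case True
        define S1 where "S1 = {l. l < b \<and> N $$ (l,j) = -1}"
        have c1: "2 * card S1 = b" and c0: "2 * card {l. l < b \<and> N $$ (l,j) = 0} = b"
          using True unfolding col_type_iii_def dr S1_def by auto
        have "s = real (card S1) * (-1)" by (rule two[OF S1_def refl c1 c0]) simp
        moreover have "real b = 2 * real (card S1)" using arg_cong[OF c1, of real] by simp
        ultimately have "s = - real b / 2" by simp
        thus ?thesis using lhs rhs True ni nii bpos by simp
      next
        case niii: False
        hence iv: "col_type_iv N j \<or> col_type_v N j" using ty j ni nii by blast
        show ?thesis
        proof (cases "col_type_iv N j")
          case True
          hence "s = real b" unfolding s_def using dr by (simp add: col_type_iv_def)
          moreover have "N $$ (h,j) = 1" using True h dr by (simp add: col_type_iv_def)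
          ultimately show ?thesis using lhs rhs lhs rhs ni nii niii bpos by simp
        next
          case False
          hence v: "col_type_v N j" using iv by blast
          hence "s = - real b" unfolding s_def using dr by (simp add: col_type_v_def)
          moreover have "N $$ (h,j) = -1" using v h dr by (simp add: col_type_v_def)
          ultimately show ?thesis using lhs rhs lhs rhs ni nii niii bpos by simp
        qed
      qed
    qed
  qed
qed (insert N, auto simp: tilde_mat_def Qm_def)

theorem proposition3p4:
  fixes B N C :: "real mat" and b c :: nat
  assumes "B \<in> carrier_mat b b" and "N \<in> carrier_mat b c" and "C \<in> carrier_mat c c"
    and "\<forall>h<b. \<forall>j<c. N $$ (h, j) \<in> {-1, 0, 1}"
    and "\<forall>j<c. col_type_i N j \<or> col_type_ii N j \<or> col_type_iii N j \<or>
                col_type_iv N j \<or> col_type_v N j"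
    and "transpose_mat B = B"
    and "\<exists>r. \<forall>i<b. (\<Sum>k<b. B $$ (i, k)) = r"
    and "transpose_mat C = C"
  shows "char_poly (four_block_mat B N (transpose_mat N) C) =
         char_poly (four_block_mat B (tilde_mat N) (transpose_mat (tilde_mat N)) C)"
proof -
  note Bc = assms(1) and Nc = assms(2) and Cc = assms(3)
  obtain r where rs: "\<forall>i<b. (\<Sum>k<b. B $$ (i, k)) = r" using assms(7) by blast
  define Q where "Q = Qm b"
  have Qc: "Q \<in> carrier_mat b b" unfolding Q_def by simp
  have QQ: "Q * Q = 1\<^sub>m b" unfolding Q_def by (rule Qm_sq)
  have QB: "Q * B = B * Q" unfolding Q_def by (rule Qm_comm[OF Bc assms(6) rs])
  have QN: "Q * N = tilde_mat N" unfolding Q_def by (rule Qm_tilde[OF Nc assms(4,5)])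
  have tc: "tilde_mat N \<in> carrier_mat b c" using QN Qc Nc by (metis mult_carrier_mat)
  have QT: "transpose_mat Q = Q" unfolding Q_def Qm_def by (rule eq_matI) auto
  have NtQ: "transpose_mat N * Q = transpose_mat (tilde_mat N)"
    unfolding QN[symmetric] transpose_mult[OF Qc Nc] QT ..
  have QBQ: "Q * B * Q = B"
    using QB QQ Bc Qc by (metis assoc_mult_mat right_mult_one_mat)
  define P where "P = four_block_mat Q (0\<^sub>m b c) (0\<^sub>m c b) (1\<^sub>m c)"
  define M where "M = four_block_mat B N (transpose_mat N) C"
  have Pc: "P \<in> carrier_mat (b+c) (b+c)" unfolding P_def using Qc by auto
  have Mc: "M \<in> carrier_mat (b+c) (b+c)" unfolding M_def using Bc Nc Cc by auto
  have PP: "P * P = 1\<^sub>m (b+c)"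
    unfolding P_def mult_four_block_mat[OF Qc zero_carrier_mat zero_carrier_mat one_carrier_mat
        Qc zero_carrier_mat zero_carrier_mat one_carrier_mat]
    using Qc QQ by simp
  have PM: "P * M = four_block_mat (Q * B) (Q * N) (transpose_mat N) C"
    unfolding P_def M_def mult_four_block_mat[OF Qc zero_carrier_mat zero_carrier_mat one_carrier_mat
        Bc Nc transpose_carrier_mat[THEN iffD2, OF Nc] Cc]
    using Qc Bc Nc Cc by simp
  have PMP: "P * M * P = four_block_mat B (tilde_mat N) (transpose_mat (tilde_mat N)) C"
    unfolding PM unfolding P_def mult_four_block_mat[OF mult_carrier_mat[OF Qc Bc] mult_carrier_mat[OF Qc Nc]
       transpose_carrier_mat[THEN iffD2, OF Nc] Cc Qc zero_carrier_mat zero_carrier_mat one_carrier_mat]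
    using Qc Bc Nc Cc QBQ NtQ QN assoc_mult_mat[OF Qc Bc Qc] tc by simp
  have "similar_mat (P * M * P) M"
    by (rule similar_matI[where n="b+c" and P=P and Q=P], insert Pc Mc PP, auto)
  from char_poly_similar[OF this] show ?thesis unfolding PMP by (simp add: M_def)
qed

end
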